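(* Let $G$ be a quasi-regular mixed lattice group. (a) Let $u,v_1,v_2\in G$ with $0\preceq u$, $0\le v_1$, $0\preceq v_2$ and $u\le v_1+v_2$. Then there exist $u_1,u_2\in G$ with $0\le u_1\le v_1$, $0\preceq u_2\le v_2$ and $u=u_1+u_2$. Moreover, if $0\preceq v_1$ then $0\preceq u_1$, and if $u\preceq v_1+v_2$ then $u_2\preceq v_2$. (b) Let $u,v_1,v_2\in G$ with $0\le u$, $0\preceq v_1$, $0\le v_2$ and $u\preceq v_1+v_2$. Then there exist $u_1,u_2\in G$ with $0\le u_1\preceq v_1$, $0\le u_2\le v_2$ and $u=u_1+u_2$. Moreover, if $0\preceq u$ then $0\preceq u_1$.
   Context: A mixed lattice group is a commutative group $G$ with two translation-invariant partial orderings $\le$ (initial order) and $\preceq$ (specific order) such that for all $x,y\in G$ the mixed lower envelope $x\curlywedge y=\max\{w: w\preceq x,\ w\le y\}$ and the mixed upper envelope $x\curlyvee y=\min\{w: x\preceq w,\ y\le w\}$ exist (max/min with respect to $\le$). $G$ is quasi-regular if $G_{sp}=\{x: 0\preceq x\}$ is closed under $\curlywedge$ and $\curlyvee$. *)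

theory Defs
  imports Main
begin

definition inv_partial_order :: "('a::ab_group_add \<Rightarrow> 'a \<Rightarrow> bool) \<Rightarrow> bool" where
  "inv_partial_order r \<longleftrightarrow>
     (\<forall>x. r x x) \<and> (\<forall>x y. r x y \<longrightarrow> r y x \<longrightarrow> x = y) \<and>
     (\<forall>x y z. r x y \<longrightarrow> r y z \<longrightarrow> r x z) \<and>
     (\<forall>x y z. r x y \<longrightarrow> r (x + z) (y + z))"

definition is_mixed_lower :: "('a \<Rightarrow> 'a \<Rightarrow> bool) \<Rightarrow> ('a \<Rightarrow> 'a \<Rightarrow> bool) \<Rightarrow> 'a \<Rightarrow> 'a \<Rightarrow> 'a \<Rightarrow> bool" where
  "is_mixed_lower le sp x y w \<longleftrightarrow> sp w x \<and> le w y \<and> (\<forall>z. sp z x \<and> le z y \<longrightarrow> le z w)"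

definition is_mixed_upper :: "('a \<Rightarrow> 'a \<Rightarrow> bool) \<Rightarrow> ('a \<Rightarrow> 'a \<Rightarrow> bool) \<Rightarrow> 'a \<Rightarrow> 'a \<Rightarrow> 'a \<Rightarrow> bool" where
  "is_mixed_upper le sp x y w \<longleftrightarrow> sp x w \<and> le y w \<and> (\<forall>z. sp x z \<and> le y z \<longrightarrow> le w z)"

definition mixed_lower :: "('a \<Rightarrow> 'a \<Rightarrow> bool) \<Rightarrow> ('a \<Rightarrow> 'a \<Rightarrow> bool) \<Rightarrow> 'a \<Rightarrow> 'a \<Rightarrow> 'a" where
  "mixed_lower le sp x y = (THE w. is_mixed_lower le sp x y w)"

definition mixed_upper :: "('a \<Rightarrow> 'a \<Rightarrow> bool) \<Rightarrow> ('a \<Rightarrow> 'a \<Rightarrow> bool) \<Rightarrow> 'a \<Rightarrow> 'a \<Rightarrow> 'a" where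
  "mixed_upper le sp x y = (THE w. is_mixed_upper le sp x y w)"

text \<open>Mixed lattice group: the carrier is the whole type (a commutative group), le is the
  initial order, sp the specific order.\<close>
definition mixed_lattice_group :: "('a::ab_group_add \<Rightarrow> 'a \<Rightarrow> bool) \<Rightarrow> ('a \<Rightarrow> 'a \<Rightarrow> bool) \<Rightarrow> bool" where
  "mixed_lattice_group le sp \<longleftrightarrow> inv_partial_order le \<and> inv_partial_order sp \<and>
     (\<forall>x y. \<exists>w. is_mixed_lower le sp x y w) \<and> (\<forall>x y. \<exists>w. is_mixed_upper le sp x y w)"

definition quasi_regular :: "('a::ab_group_add \<Rightarrow> 'a \<Rightarrow> bool) \<Rightarrow> ('a \<Rightarrow> 'a \<Rightarrow> bool) \<Rightarrow> bool" where
  "quasi_regular le sp \<longleftrightarrow> mixed_lattice_group le sp \<and>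
     (\<forall>x y. sp 0 x \<longrightarrow> sp 0 y \<longrightarrow> sp 0 (mixed_lower le sp x y) \<and> sp 0 (mixed_upper le sp x y))"

end

theory Submission
  imports Defs
begin

lemma ipo_shift:
  assumes "inv_partial_order r" "r a b" "b' - a' = b - a"
  shows "r a' b'"
proof -
  have "r (a + (a' - a)) (b + (a' - a))" using assms(1,2) unfolding inv_partial_order_def by blast
  moreover have "a + (a' - a) = a'" by simp
  moreover have "b + (a' - a) = b'" using assms(3) by (metis add.commute diff_add_cancel diff_diff_eq2)
  ultimately show ?thesis by simp
qed

lemma ipo_antisym: "inv_partial_order r \<Longrightarrow> r x y \<Longrightarrow> r y x \<Longrightarrow> x = y"
  unfolding inv_partial_order_def by blast

lemma lower_is:
  assumes "mixed_lattice_group le sp"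
  shows "is_mixed_lower le sp x y (mixed_lower le sp x y)"
proof -
  have le: "inv_partial_order le" using assms unfolding mixed_lattice_group_def by blast
  obtain w where w: "is_mixed_lower le sp x y w" using assms unfolding mixed_lattice_group_def by blast
  have "\<And>w'. is_mixed_lower le sp x y w' \<Longrightarrow> w' = w"
    using w le ipo_antisym[OF le] unfolding is_mixed_lower_def by blast
  then have "(THE w. is_mixed_lower le sp x y w) = w" using w by (rule the_equality[rotated])
  then show ?thesis using w unfolding mixed_lower_def by simp
qed

lemma lower_unique:
  assumes "mixed_lattice_group le sp" "is_mixed_lower le sp x y w"
  shows "mixed_lower le sp x y = w"
proof -
  have le: "inv_partial_order le" using assms unfolding mixed_lattice_group_def by blast
  show ?thesis using lower_is[OF assms(1), of x y] assms(2) ipo_antisym[OF le]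
    unfolding is_mixed_lower_def by blast
qed

lemma lower_shift:
  assumes "mixed_lattice_group le sp"
  shows "mixed_lower le sp (x + t) (y + t) = mixed_lower le sp x y + t"
proof -
  have le: "inv_partial_order le" and sp: "inv_partial_order sp"
    using assms unfolding mixed_lattice_group_def by blast+
  define m where "m = mixed_lower le sp x y"
  have m: "is_mixed_lower le sp x y m" using lower_is[OF assms] m_def by simp
  have "is_mixed_lower le sp (x + t) (y + t) (m + t)"
    unfolding is_mixed_lower_def
  proof (intro conjI allI impI)
    show "sp (m + t) (x + t)" using m ipo_shift[OF sp] unfolding is_mixed_lower_def
      by (metis add_diff_cancel_right)
    show "le (m + t) (y + t)" using m ipo_shift[OF le] unfolding is_mixed_lower_def
      by (metis add_diff_cancel_right)
    fix z assume z: "sp z (x + t) \<and> le z (y + t)"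
    have "sp (z - t) x" using z ipo_shift[OF sp, of z "x + t" x "z - t"] by (simp add: algebra_simps)
    moreover have "le (z - t) y" using z ipo_shift[OF le, of z "y + t" y "z - t"] by (simp add: algebra_simps)
    ultimately have "le (z - t) m" using m unfolding is_mixed_lower_def by blast
    then show "le z (m + t)" by (rule ipo_shift[OF le]) (simp add: algebra_simps)
  qed
  then show ?thesis using lower_unique[OF assms] m_def by simp
qed

theorem theorem3p9:
  fixes le sp :: "'a::ab_group_add \<Rightarrow> 'a \<Rightarrow> bool"
  assumes "quasi_regular le sp"
  shows "(\<forall>u v1 v2. sp 0 u \<and> le 0 v1 \<and> sp 0 v2 \<and> le u (v1 + v2) \<longrightarrow>
            (\<exists>u1 u2. le 0 u1 \<and> le u1 v1 \<and> sp 0 u2 \<and> le u2 v2 \<and> u = u1 + u2 \<and>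
                     (sp 0 v1 \<longrightarrow> sp 0 u1) \<and> (sp u (v1 + v2) \<longrightarrow> sp u2 v2)))
       \<and> (\<forall>u v1 v2. le 0 u \<and> sp 0 v1 \<and> le 0 v2 \<and> sp u (v1 + v2) \<longrightarrow>
            (\<exists>u1 u2. le 0 u1 \<and> sp u1 v1 \<and> le 0 u2 \<and> le u2 v2 \<and> u = u1 + u2 \<and>
                     (sp 0 u \<longrightarrow> sp 0 u1)))"
proof -
  have G: "mixed_lattice_group le sp" using assms unfolding quasi_regular_def by blast
  have le: "inv_partial_order le" and sp: "inv_partial_order sp"
    using G unfolding mixed_lattice_group_def by blast+
  have QR: "\<And>x y. sp 0 x \<Longrightarrow> sp 0 y \<Longrightarrow> sp 0 (mixed_lower le sp x y)"
    using assms unfolding quasi_regular_def by blast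
  have A: "\<exists>u1 u2. le 0 u1 \<and> le u1 v1 \<and> sp 0 u2 \<and> le u2 v2 \<and> u = u1 + u2 \<and>
                     (sp 0 v1 \<longrightarrow> sp 0 u1) \<and> (sp u (v1 + v2) \<longrightarrow> sp u2 v2)"
    if h: "sp 0 u" "le 0 v1" "sp 0 v2" "le u (v1 + v2)" for u v1 v2
  proof -
    define m where "m = mixed_lower le sp u v1"
    have m: "sp m u" "le m v1" "\<And>z. sp z u \<Longrightarrow> le z v1 \<Longrightarrow> le z m"
      using lower_is[OF G, of u v1] unfolding m_def is_mixed_lower_def by blast+
    have 1: "le 0 m" using m(3) h by blast
    have 2: "sp 0 (u - m)" using ipo_shift[OF sp m(1)] by simp
    have "sp (u - v2) u" using ipo_shift[OF sp h(3)] by simp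
    moreover have "le (u - v2) v1" using ipo_shift[OF le h(4)] by (simp add: algebra_simps)
    ultimately have "le (u - v2) m" using m(3) by blast
    then have 3: "le (u - m) v2" using ipo_shift[OF le] by (simp add: algebra_simps)
    have 4: "sp 0 m" if "sp 0 v1" using QR[OF h(1) that] m_def by simp
    have 5: "sp (u - m) v2" if hs: "sp u (v1 + v2)"
    proof -
      have "sp 0 (v1 + v2 - u)" using ipo_shift[OF sp hs] by simp
      then have "sp 0 (mixed_lower le sp v2 (v1 + v2 - u))" using QR h(3) by blast
      moreover have "mixed_lower le sp v2 (v1 + v2 - u) = m + (v2 - u)"
        using lower_shift[OF G, of u "v2 - u" v1] m_def by (simp add: algebra_simps)
      ultimately have "sp 0 (m + (v2 - u))" by simp
      then show ?thesis using ipo_shift[OF sp] by (simp add: algebra_simps)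
    qed
    show ?thesis
      by (rule exI[of _ m], rule exI[of _ "u - m"]) (use 1 m(2) 2 3 4 5 in simp)
  qed
  have B: "\<exists>u1 u2. le 0 u1 \<and> sp u1 v1 \<and> le 0 u2 \<and> le u2 v2 \<and> u = u1 + u2 \<and>
                     (sp 0 u \<longrightarrow> sp 0 u1)"
    if h: "le 0 u" "sp 0 v1" "le 0 v2" "sp u (v1 + v2)" for u v1 v2
  proof -
    define m where "m = mixed_lower le sp v1 u"
    have m: "sp m v1" "le m u" "\<And>z. sp z v1 \<Longrightarrow> le z u \<Longrightarrow> le z m"
      using lower_is[OF G, of v1 u] unfolding m_def is_mixed_lower_def by blast+
    have 1: "le 0 m" using m(3) h by blast
    have 2: "le 0 (u - m)" using ipo_shift[OF le m(2)] by simp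
    have "sp (u - v2) v1" using ipo_shift[OF sp h(4)] by (simp add: algebra_simps)
    moreover have "le (u - v2) u" using ipo_shift[OF le h(3)] by simp
    ultimately have "le (u - v2) m" using m(3) by blast
    then have 3: "le (u - m) v2" using ipo_shift[OF le] by (simp add: algebra_simps)
    have 4: "sp 0 m" if "sp 0 u" using QR[OF h(2) that] m_def by simp
    show ?thesis
      by (rule exI[of _ m], rule exI[of _ "u - m"]) (use 1 m(1) 2 3 4 in simp)
  qed
  show ?thesis using A B by blast
qed

end
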